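(* Let $(M,g)$ be a Riemannian manifold, $F_1,\dots,F_k,G:M\to\mathbb{R}$ smooth, $c$ a regular value of $\mathbf{F}=(F_1,\dots,F_k):M\to\mathbb{R}^k$ and $L_c=\mathbf{F}^{-1}(c)$. Then for every $x\in L_c$, $$\mathbf{v}_0(x)=\det\Sigma_{(F_1,\dots,F_k)}^{(F_1,\dots,F_k)}(x)\,P_{T_xL_c}(\nabla G(x)),$$ where $P_{T_xL_c}:T_xM\to T_xM$ is the $g$-orthogonal projection of $T_xM$ onto $T_xL_c=\ker D\mathbf{F}(x)$ along its orthogonal complement $\mathrm{Sp}[\nabla F_1(x),\dots,\nabla F_k(x)]$.
   Context: $\langle\cdot,\cdot\rangle$ is the inner product of $g$, $\nabla$ the gradient. $\Sigma_{(g_1,\dots,g_s)}^{(f_1,\dots,f_r)}$ is the $r\times s$ matrix with entry $\langle\nabla g_b,\nabla f_a\rangle$ in row $a$, column $b$; $\widehat{\cdot}$ denotes omission; empty determinant is $1$. The standard control vector field is $$\mathbf{v_0}=\sum_{i=1}^k(-1)^{i+k+1}\det\Sigma_{(F_1,\dots,\widehat{F_i},\dots,F_k,G)}^{(F_1,\dots,F_k)}\nabla F_i+\det\Sigma_{(F_1,\dots,F_k)}^{(F_1,\dots,F_k)}\nabla G.$$ *)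

theory Defs
  imports "HOL-Analysis.Analysis" "Jordan_Normal_Form.Determinant"
begin

text \<open>Pointwise (tangent-space) setting. The tangent space T_xM is a finite-dimensional
real vector space of type 'v carrying the inner product g_x (an arbitrary symmetric,
bilinear, positive definite form g). Gradients of F_1..F_k at x are gF 0 .. gF (k-1),
the gradient of G at x is gG. Indices are 0-based.\<close>

definition inner_product_form :: "('v::euclidean_space \<Rightarrow> 'v \<Rightarrow> real) \<Rightarrow> bool" where
  "inner_product_form g \<longleftrightarrow> bilinear g \<and> (\<forall>u v. g u v = g v u) \<and> (\<forall>v. v \<noteq> 0 \<longrightarrow> g v v > 0)"

definition Sigma_mat :: "('v \<Rightarrow> 'v \<Rightarrow> real) \<Rightarrow> (nat \<Rightarrow> 'v) \<Rightarrow> nat \<Rightarrow> (nat \<Rightarrow> 'v) \<Rightarrow> nat \<Rightarrow> real Matrix.mat" where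
  "Sigma_mat g fs r hs s = Matrix.mat r s (\<lambda>(a, b). g (hs b) (fs a))"

text \<open>The list (F_1,..,F_i omitted,..,F_k,G) (0-based omitted index i < k), as gradients.\<close>
definition omit_then :: "(nat \<Rightarrow> 'v) \<Rightarrow> nat \<Rightarrow> nat \<Rightarrow> 'v \<Rightarrow> nat \<Rightarrow> 'v" where
  "omit_then gF k i gG b = (if b < i then gF b else if b < k - 1 then gF (Suc b) else gG)"

text \<open>Standard control vector field v_0 at the point (1-based index i+1, sign (-1)^((i+1)+k+1)).\<close>
definition control_v0 :: "('v::euclidean_space \<Rightarrow> 'v \<Rightarrow> real) \<Rightarrow> (nat \<Rightarrow> 'v) \<Rightarrow> 'v \<Rightarrow> nat \<Rightarrow> 'v" where
  "control_v0 g gF gG k =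
     (\<Sum>i<k. ((-1) ^ (i + k) * Determinant.det (Sigma_mat g gF k (omit_then gF k i gG) k)) *\<^sub>R gF i)
     + Determinant.det (Sigma_mat g gF k gF k) *\<^sub>R gG"

definition orth_proj :: "('v::euclidean_space \<Rightarrow> 'v \<Rightarrow> real) \<Rightarrow> 'v set \<Rightarrow> 'v \<Rightarrow> 'v" where
  "orth_proj g K w = (THE p. p \<in> K \<and> (\<forall>u\<in>K. g (w - p) u = 0))"

text \<open>Tangent space of the level set: ker DF(x), where DF(x) v = (g(grad F_i, v))_i.\<close>
definition level_tangent :: "('v::euclidean_space \<Rightarrow> 'v \<Rightarrow> real) \<Rightarrow> (nat \<Rightarrow> 'v) \<Rightarrow> nat \<Rightarrow> 'v set" where
  "level_tangent g gF k = {v. \<forall>i<k. g (gF i) v = 0}"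

end

theory Submission
  imports Defs
begin

lemma bl_lsum: "bilinear h \<Longrightarrow> h (sum f S) y = (\<Sum>i\<in>S. h (f i) y)"
proof -
  assume "bilinear h"
  then interpret l: linear "\<lambda>x. h x y" by (simp add: bilinear_def)
  show ?thesis by (simp add: l.sum)
qed

lemma bl_rsum: "bilinear h \<Longrightarrow> h y (sum f S) = (\<Sum>i\<in>S. h y (f i))"
proof -
  assume "bilinear h"
  then interpret l: linear "\<lambda>x. h y x" by (simp add: bilinear_def)
  show ?thesis by (simp add: l.sum)
qed

lemma ifh: "(d::real) * (if P then 1 else 0) * x = (if P then d * x else 0)" by simp

lemma omit_det:
  assumes i: "i < k"
  shows "Determinant.det (Sigma_mat g gF k (omit_then gF k i gG) k)
     = (-1)^(k - 1 - i) * Determinant.det (replace_col (Sigma_mat g gF k gF k) (vec k (\<lambda>a. g gG (gF a))) i)"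
proof -
  let ?A = "replace_col (Sigma_mat g gF k gF k) (vec k (\<lambda>a. g gG (gF a))) i"
  have A: "?A \<in> carrier_mat k k" by (simp add: replace_col_def Sigma_mat_def)
  have m: "k = i + 1 + (k - 1 - i)" using i by simp
  have "Determinant.det ?A = (-1)^(1 * (k - 1 - i)) *
    Determinant.det (mat k k (\<lambda>(a, j). ?A $$ (a, if j < i then j else if j < i + (k - 1 - i) then j + 1 else j - (k - 1 - i))))"
    by (rule det_swap_final_cols[OF A m])
  also have "mat k k (\<lambda>(a, j). ?A $$ (a, if j < i then j else if j < i + (k - 1 - i) then j + 1 else j - (k - 1 - i)))
      = Sigma_mat g gF k (omit_then gF k i gG) k"
    using i by (intro eq_matI) (auto simp: replace_col_def Sigma_mat_def omit_then_def)
  finally show ?thesis by simp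
qed

theorem theorem5p2:
  fixes g :: "'v::euclidean_space \<Rightarrow> 'v \<Rightarrow> real"
    and gF :: "nat \<Rightarrow> 'v" and gG :: 'v and k :: nat
  assumes "inner_product_form g"
    and regular: "\<forall>y::nat \<Rightarrow> real. \<exists>v. \<forall>i<k. g (gF i) v = y i"
  shows "control_v0 g gF gG k
           = Determinant.det (Sigma_mat g gF k gF k) *\<^sub>R orth_proj g (level_tangent g gF k) gG"
proof -
  have bl: "bilinear g" and sym: "\<And>u v. g u v = g v u" and pd: "\<And>v. v \<noteq> 0 \<Longrightarrow> g v v > 0"
    using assms(1) by (auto simp: inner_product_form_def)
  have gz: "g v v = 0 \<Longrightarrow> v = 0" for v using pd[of v] by force
  define M where "M = Sigma_mat g gF k gF k"
  define r where "r = vec k (\<lambda>a. g gG (gF a))"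
  define d where "d = Determinant.det M"
  have M: "M \<in> carrier_mat k k" by (simp add: M_def Sigma_mat_def)
  have r: "r \<in> carrier_vec k" by (simp add: r_def)
  have Mv: "(M *\<^sub>v x) $ a = (\<Sum>b<k. g (gF b) (gF a) * x $ b)" if "a < k" "x \<in> carrier_vec k" for a x
    using that by (auto simp: M_def Sigma_mat_def mult_mat_vec_def scalar_prod_def Matrix.row_def
      atLeast0LessThan intro!: sum.cong)
  have d0: "d \<noteq> 0"
  proof
    assume "d = 0"
    then obtain x where x: "x \<in> carrier_vec k" "x \<noteq> 0\<^sub>v k" "M *\<^sub>v x = 0\<^sub>v k"
      using det_0_iff_vec_prod_zero_field[OF M] d_def by auto
    define w where "w = (\<Sum>b<k. (x $ b) *\<^sub>R gF b)"
    have ga: "g w (gF a) = 0" if "a < k" for a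
    proof -
      have "g w (gF a) = (\<Sum>b<k. g (gF b) (gF a) * x $ b)"
        unfolding w_def by (simp add: bl_lsum[OF bl] bilinear_lmul[OF bl] mult.commute)
      also have "\<dots> = (M *\<^sub>v x) $ a" using Mv[OF that x(1)] by simp
      finally show ?thesis using x(3) that by simp
    qed
    have "g w w = 0"
      by (subst (2) w_def) (simp add: bl_rsum[OF bl] bilinear_rmul[OF bl] ga)
    then have w0: "w = 0" by (rule gz)
    obtain v where v: "\<forall>i<k. g (gF i) v = x $ i" using regular by blast
    have "(\<Sum>b<k. (x $ b)^2) = g w v"
      unfolding w_def by (simp add: bl_lsum[OF bl] bilinear_lmul[OF bl] v power2_eq_square)
    then have "(\<Sum>b<k. (x $ b)^2) = 0" using w0 bilinear_lzero[OF bl] by simp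
    then have "\<forall>b\<in>{..<k}. (x $ b)^2 = 0" by (subst sum_nonneg_eq_0_iff[symmetric]) auto
    then have "x = 0\<^sub>v k" using x(1) by (intro eq_vecI) auto
    with x(2) show False by simp
  qed
  define c where "c = (1 / d) \<cdot>\<^sub>v (adj_mat M *\<^sub>v r)"
  have c: "c \<in> carrier_vec k" using adj_mat(1)[OF M] r by (simp add: c_def)
  have Mc: "M *\<^sub>v c = r"
  proof -
    have "M *\<^sub>v c = (1/d) \<cdot>\<^sub>v (M *\<^sub>v (adj_mat M *\<^sub>v r))"
      unfolding c_def using M adj_mat(1)[OF M] r by (simp add: mult_mat_vec)
    also have "M *\<^sub>v (adj_mat M *\<^sub>v r) = (M * adj_mat M) *\<^sub>v r"
      using M adj_mat(1)[OF M] r by (simp add: assoc_mult_mat_vec)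
    also have "\<dots> = d \<cdot>\<^sub>v r" using adj_mat(2)[OF M] M r
      by (simp add: d_def[symmetric]) (intro eq_vecI, auto simp: mult_mat_vec_def scalar_prod_def
        Matrix.row_def ifh)
    finally show ?thesis using d0 by (simp add: smult_smult_assoc)
  qed
  have cr: "(\<Sum>b<k. g (gF b) (gF a) * c $ b) = g gG (gF a)" if "a < k" for a
    using Mv[OF that c] Mc that r_def by simp
  define p where "p = gG - (\<Sum>i<k. (c $ i) *\<^sub>R gF i)"
  have v0: "control_v0 g gF gG k = d *\<^sub>R p"
  proof -
    have od: "Determinant.det (Sigma_mat g gF k (omit_then gF k i gG) k) = (-1)^(k - 1 - i) * (c $ i * d)"
      if "i < k" for i
      using omit_det[OF that, of g gF gG] cramer_lemma_mat[OF M c that] Mc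
      by (simp add: M_def r_def d_def)
    then have "(\<Sum>i<k. ((-1) ^ (i + k) * Determinant.det (Sigma_mat g gF k (omit_then gF k i gG) k)) *\<^sub>R gF i)
       = (\<Sum>i<k. (- (c $ i * d)) *\<^sub>R gF i)"
    proof (intro sum.cong refl)
      fix i assume i: "i \<in> {..<k}"
      have "(-1::real) ^ (i + k) * (-1)^(k - 1 - i) = (-1)^(i + k + (k - 1 - i))" by (simp add: power_add)
      also have "i + k + (k - 1 - i) = Suc (2 * (k - 1))" using i by auto
      finally have "(-1::real) ^ (i + k) * (-1)^(k - 1 - i) = -1" by simp
      with od[of i] i show "((-1) ^ (i + k) * Determinant.det (Sigma_mat g gF k (omit_then gF k i gG) k)) *\<^sub>R gF i
         = (- (c $ i * d)) *\<^sub>R gF i"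
        by (simp add: mult.assoc[symmetric])
    qed
    then show ?thesis
      unfolding control_v0_def p_def M_def[symmetric] d_def[symmetric]
      by (simp add: scaleR_diff_right scaleR_sum_right algebra_simps sum_negf)
  qed
  let ?K = "level_tangent g gF k"
  have pK: "p \<in> ?K"
  proof -
    have "g (gF a) p = 0" if "a < k" for a
    proof -
      have "g (gF a) p = g (gF a) gG - (\<Sum>i<k. c $ i * g (gF a) (gF i))"
        unfolding p_def by (simp add: bilinear_rsub[OF bl] bl_rsum[OF bl] bilinear_rmul[OF bl])
      also have "(\<Sum>i<k. c $ i * g (gF a) (gF i)) = g gG (gF a)"
        using cr[OF that] by (simp add: sym[of "gF a"] mult.commute)
      finally show ?thesis using sym by simp
    qed
    then show ?thesis by (simp add: level_tangent_def)
  qed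
  have pperp: "\<forall>u\<in>?K. g (gG - p) u = 0"
    by (simp add: p_def level_tangent_def bl_lsum[OF bl] bilinear_lmul[OF bl])
  have proj: "orth_proj g ?K gG = p"
    unfolding orth_proj_def
  proof (rule the_equality)
    show "p \<in> ?K \<and> (\<forall>u\<in>?K. g (gG - p) u = 0)" using pK pperp by simp
  next
    fix q assume q: "q \<in> ?K \<and> (\<forall>u\<in>?K. g (gG - q) u = 0)"
    have "p - q \<in> ?K" using pK q by (simp add: level_tangent_def bilinear_rsub[OF bl])
    then have "g (gG - q) (p - q) - g (gG - p) (p - q) = 0" using q pperp by simp
    then have "g (p - q) (p - q) = 0"
      by (simp add: bilinear_lsub[OF bl] bilinear_rsub[OF bl] algebra_simps)
    then show "q = p" using gz by fastforce
  qed
  show ?thesis using v0 proj by (simp add: M_def d_def)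
qed

end
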